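(* Let $\mathcal A$ be a unital associative algebra over $\mathbb C$, $L\ge0$, and let $A,B,C\in\mathcal A$ satisfy $[A,B]=C$ and $[A,C]=\sum_{i=1}^{L+1}\alpha_iA^i+\delta B+\epsilon+\beta\{A,B\}$. Define numbers $\bar x_{i,j}$ ($j\ge1$, $0\le i\le j-1$) and $\bar y_{i,j}$ ($j\ge1$, $0\le i\le j$) by $\bar x_{0,1}=1$, $\bar y_{0,1}=0$, $\bar y_{1,1}=1$ and, for $j\ge2$, $$\bar x_{i,j}=\bar x_{i-1,j-1}+\beta\bar x_{i,j-1}+\bar y_{i,j-1},\qquad \bar y_{i,j}=\delta\bar x_{i,j-1}+2\beta\bar x_{i-1,j-1}+\bar y_{i-1,j-1},$$ with the conventions $\bar x_{-1,j}=\bar y_{-1,j}=0$ and $\bar x_{j,j}=\bar x_{j+1,j}=0$ for all $j\ge1$. Then for all integers $i>j\ge1$, $$A^iBA^j-A^jBA^i=\sum_{k=0}^{j}\bar y_{k,j}[A^{i+k},B]-\sum_{k=0}^{j-1}\bar x_{k,j}\{A^{i+k},C\}.$$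
   Context: $[X,Y]=XY-YX$, $\{X,Y\}=XY+YX$, $A^0=1$. *)

theory Defs
  imports Complex_Main
begin

text \<open>A unital associative algebra over the complex numbers is modelled as a ring
  with unit of type 'a together with a unital ring homomorphism phi from complex
  into 'a whose image is central; scalar multiplication c.x is phi c * x.\<close>

definition central_complex_hom :: "(complex \<Rightarrow> 'a::ring_1) \<Rightarrow> bool" where
  "central_complex_hom \<phi> \<longleftrightarrow>
     \<phi> 1 = 1 \<and>
     (\<forall>a b. \<phi> (a + b) = \<phi> a + \<phi> b) \<and>
     (\<forall>a b. \<phi> (a * b) = \<phi> a * \<phi> b) \<and>
     (\<forall>c x. \<phi> c * x = x * \<phi> c)"

definition commutator :: "'a::ring \<Rightarrow> 'a \<Rightarrow> 'a" where
  "commutator X Y = X * Y - Y * X"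

definition anticommutator :: "'a::ring \<Rightarrow> 'a \<Rightarrow> 'a" where
  "anticommutator X Y = X * Y + Y * X"

text \<open>xyb beta delta j = (i. xbar(i,j), i. ybar(i,j)), with value 0 outside
  the index ranges 0 <= i <= j-1 (for xbar) and 0 <= i <= j (for ybar);
  this matches the conventions xbar(-1,j)=ybar(-1,j)=0, xbar(j,j)=xbar(j+1,j)=0.
  The level j = 0 is unused.\<close>

fun xyb :: "complex \<Rightarrow> complex \<Rightarrow> nat \<Rightarrow> (nat \<Rightarrow> complex) \<times> (nat \<Rightarrow> complex)" where
  "xyb \<beta> \<delta> 0 = (\<lambda>i. 0, \<lambda>i. 0)"
| "xyb \<beta> \<delta> (Suc 0) = (\<lambda>i. if i = 0 then 1 else 0, \<lambda>i. if i = 1 then 1 else 0)"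
| "xyb \<beta> \<delta> (Suc (Suc n)) =
    (let x = fst (xyb \<beta> \<delta> (Suc n)); y = snd (xyb \<beta> \<delta> (Suc n));
         xm = (\<lambda>i. if i = 0 then 0 else x (i - 1));
         ym = (\<lambda>i. if i = 0 then 0 else y (i - 1))
     in (\<lambda>i. if i < Suc (Suc n) then xm i + \<beta> * x i + y i else 0,
         \<lambda>i. if i \<le> Suc (Suc n) then \<delta> * x i + 2 * \<beta> * xm i + ym i else 0))"

definition xbar :: "complex \<Rightarrow> complex \<Rightarrow> nat \<Rightarrow> nat \<Rightarrow> complex" where
  "xbar \<beta> \<delta> i j = fst (xyb \<beta> \<delta> j) i"

definition ybar :: "complex \<Rightarrow> complex \<Rightarrow> nat \<Rightarrow> nat \<Rightarrow> complex" where
  "ybar \<beta> \<delta> i j = snd (xyb \<beta> \<delta> j) i"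

end

theory Submission
  imports Defs
begin

lemma shift_sum:
  fixes h :: "nat \<Rightarrow> 'a::ring_1" and \<phi> :: "complex \<Rightarrow> 'a" and x :: "nat \<Rightarrow> complex"
  assumes h0: "\<phi> 0 = 0" and M1: "M \<ge> 1" and xM: "x (M-1) = 0"
  shows "(\<Sum>k<M. \<phi> (if k = 0 then 0 else x (k-1)) * h k) = (\<Sum>k<M. \<phi> (x k) * h (Suc k))"
proof -
  obtain M' where M: "M = Suc M'" using M1 by (cases M) auto
  have "(\<Sum>k<M. \<phi> (if k = 0 then 0 else x (k-1)) * h k) = (\<Sum>k<M'. \<phi> (x k) * h (Suc k))"
    unfolding M by (subst sum.lessThan_Suc_shift) (simp add: h0)
  also have "\<dots> = (\<Sum>k<M. \<phi> (x k) * h (Suc k))"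
    using xM h0 M by simp
  finally show ?thesis .
qed

lemma step:
  fixes \<phi> :: "complex \<Rightarrow> 'a::ring_1" and D :: "nat \<Rightarrow> nat \<Rightarrow> 'a"
  assumes h0: "\<phi> 0 = 0" and hadd: "\<And>a b. \<phi> (a+b) = \<phi> a + \<phi> b"
    and hmul: "\<And>a b. \<phi> (a*b) = \<phi> a * \<phi> b" and h1: "\<phi> 1 = 1"
    and R: "\<And>p q. D (p+2) q - 2*D (p+1) (q+1) + D p (q+2)
              = \<phi> \<delta> * D p q + \<phi> \<beta> * (D (p+1) q + D p (q+1))"
    and M: "M \<ge> 1" and xM: "\<forall>k\<ge>M-1. x k = 0" and yM: "\<forall>k\<ge>M-1. y k = 0"
  shows "(\<Sum>k<M. \<phi> (\<delta> * x k + 2*\<beta>*(if k=0 then 0 else x (k-1)) + (if k=0 then 0 else y (k-1))) * D (i+k) q)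
       - (\<Sum>k<M. \<phi> ((if k=0 then 0 else x (k-1)) + \<beta> * x k + y k) * (D (i+k+1) q - D (i+k) (q+1)))
       = (\<Sum>k<M. \<phi> (y k) * D (i+k) (q+1)) - (\<Sum>k<M. \<phi> (x k) * (D (i+k+1) (q+1) - D (i+k) (q+2)))"
proof -
  define f where "f k = D (i+k) q" for k
  define g where "g k = D (i+k+1) q - D (i+k) (q+1)" for k
  define xm where "xm k = (if k=0 then 0 else x (k-1))" for k
  define ym where "ym k = (if k=0 then 0 else y (k-1))" for k
  have cm: "\<phi> (c * a) = \<phi> a * \<phi> c" for a c by (metis hmul mult.commute)
  have e1: "(\<Sum>k<M. \<phi> (\<delta> * x k + 2*\<beta>*xm k + ym k) * f k)
      = (\<Sum>k<M. \<phi> (x k) * (\<phi> \<delta> * f k)) + (\<Sum>k<M. \<phi> (xm k) * (\<phi> (2*\<beta>) * f k))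
        + (\<Sum>k<M. \<phi> (ym k) * f k)"
    by (simp add: hadd cm distrib_right mult.assoc sum.distrib)
  have e2: "(\<Sum>k<M. \<phi> (xm k + \<beta> * x k + y k) * g k)
      = (\<Sum>k<M. \<phi> (xm k) * g k) + (\<Sum>k<M. \<phi> (x k) * (\<phi> \<beta> * g k))
        + (\<Sum>k<M. \<phi> (y k) * g k)"
    by (simp add: hadd cm distrib_right mult.assoc sum.distrib)
  have s1: "(\<Sum>k<M. \<phi> (xm k) * (\<phi> (2*\<beta>) * f k)) = (\<Sum>k<M. \<phi> (x k) * (\<phi> (2*\<beta>) * f (Suc k)))"
    unfolding xm_def by (rule shift_sum[of \<phi>, OF h0 M]) (use xM in simp)
  have s2: "(\<Sum>k<M. \<phi> (ym k) * f k) = (\<Sum>k<M. \<phi> (y k) * f (Suc k))"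
    unfolding ym_def by (rule shift_sum[of \<phi>, OF h0 M]) (use yM in simp)
  have s3: "(\<Sum>k<M. \<phi> (xm k) * g k) = (\<Sum>k<M. \<phi> (x k) * g (Suc k))"
    unfolding xm_def by (rule shift_sum[of \<phi>, OF h0 M]) (use xM in simp)
  have two: "\<phi> (2*\<beta>) = 2 * \<phi> \<beta>"
  proof -
    have "\<phi> 2 = 2" using hadd[of 1 1] h1 by simp
    then show ?thesis by (simp add: hmul)
  qed
  have py: "\<phi> (y k) * D (i+k) (q+1) = \<phi> (y k) * f (Suc k) - \<phi> (y k) * g k" for k
    by (simp add: f_def g_def algebra_simps)
  have gx: "D (i+k+1) (q+1) - D (i+k) (q+2) = g (Suc k) + \<phi> \<beta> * g k - \<phi> \<delta> * f k - \<phi> (2*\<beta>) * f (Suc k)" for k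
  proof -
    have r: "D (i+k+2) q - 2*D (i+k+1) (q+1) + D (i+k) (q+2)
              = \<phi> \<delta> * D (i+k) q + \<phi> \<beta> * (D (i+k+1) q + D (i+k) (q+1))"
      using R[of "i+k" q] by (simp add: add.assoc)
    show ?thesis unfolding two f_def g_def using r
      by (simp add: algebra_simps mult_2)
  qed
  have px: "\<phi> (x k) * (D (i+k+1) (q+1) - D (i+k) (q+2)) = \<phi> (x k) * g (Suc k) + \<phi> (x k) * (\<phi> \<beta> * g k)
     - \<phi> (x k) * (\<phi> \<delta> * f k) - \<phi> (x k) * (\<phi> (2*\<beta>) * f (Suc k))" for k
    unfolding gx by (simp add: algebra_simps)
  have ry: "(\<Sum>k<M. \<phi> (y k) * D (i+k) (q+1)) = (\<Sum>k<M. \<phi> (y k) * f (Suc k)) - (\<Sum>k<M. \<phi> (y k) * g k)"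
    unfolding py by (simp add: sum_subtractf)
  have rx: "(\<Sum>k<M. \<phi> (x k) * (D (i+k+1) (q+1) - D (i+k) (q+2))) =
     (\<Sum>k<M. \<phi> (x k) * g (Suc k)) + (\<Sum>k<M. \<phi> (x k) * (\<phi> \<beta> * g k))
     - (\<Sum>k<M. \<phi> (x k) * (\<phi> \<delta> * f k)) - (\<Sum>k<M. \<phi> (x k) * (\<phi> (2*\<beta>) * f (Suc k)))"
    unfolding px by (simp add: sum_subtractf sum.distrib)
  have ab: "\<And>L R X1 X2 Y1 X3 X4 Y2 :: 'a. L = X1+X2+Y1-(X3+X4+Y2) \<Longrightarrow> R = (Y1-Y2) - (X3+X4-X1-X2) \<Longrightarrow> L = R"
  proof -
    fix L R X1 X2 Y1 X3 X4 Y2 :: 'a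
    assume "L = X1+X2+Y1-(X3+X4+Y2)" "R = (Y1-Y2) - (X3+X4-X1-X2)"
    moreover have "X1+X2+Y1-(X3+X4+Y2) = (Y1-Y2) - (X3+X4-X1-X2)" by (simp add: algebra_simps)
    ultimately show "L = R" by simp
  qed
  have L: "(\<Sum>k<M. \<phi> (\<delta> * x k + 2*\<beta>*xm k + ym k) * f k) - (\<Sum>k<M. \<phi> (xm k + \<beta> * x k + y k) * g k)
     = (\<Sum>k<M. \<phi> (x k) * (\<phi> \<delta> * f k)) + (\<Sum>k<M. \<phi> (x k) * (\<phi> (2*\<beta>) * f (Suc k)))
       + (\<Sum>k<M. \<phi> (y k) * f (Suc k)) - ((\<Sum>k<M. \<phi> (x k) * g (Suc k)) + (\<Sum>k<M. \<phi> (x k) * (\<phi> \<beta> * g k))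
        + (\<Sum>k<M. \<phi> (y k) * g k))"
    unfolding e1 e2 s1 s2 s3 ..
  have Rr: "(\<Sum>k<M. \<phi> (y k) * D (i+k) (q+1)) - (\<Sum>k<M. \<phi> (x k) * (D (i+k+1) (q+1) - D (i+k) (q+2)))
     = ((\<Sum>k<M. \<phi> (y k) * f (Suc k)) - (\<Sum>k<M. \<phi> (y k) * g k)) - ((\<Sum>k<M. \<phi> (x k) * g (Suc k)) + (\<Sum>k<M. \<phi> (x k) * (\<phi> \<beta> * g k))
     - (\<Sum>k<M. \<phi> (x k) * (\<phi> \<delta> * f k)) - (\<Sum>k<M. \<phi> (x k) * (\<phi> (2*\<beta>) * f (Suc k))))"
    unfolding ry rx ..
  from ab[OF L Rr] show ?thesis
    unfolding f_def g_def xm_def ym_def by simp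
qed

lemma xyb_supp:
  "(\<forall>k\<ge>Suc n. fst (xyb \<beta> \<delta> (Suc n)) k = 0) \<and> (\<forall>k>Suc n. snd (xyb \<beta> \<delta> (Suc n)) k = 0)"
  by (cases n) (auto simp: Let_def)

lemma xyb_rec_x:
  "fst (xyb \<beta> \<delta> (Suc (Suc n))) k = (if k=0 then 0 else fst (xyb \<beta> \<delta> (Suc n)) (k-1))
     + \<beta> * fst (xyb \<beta> \<delta> (Suc n)) k + snd (xyb \<beta> \<delta> (Suc n)) k"
  using xyb_supp[of n \<beta> \<delta>] by (auto simp: Let_def)

lemma xyb_rec_y:
  "snd (xyb \<beta> \<delta> (Suc (Suc n))) k = \<delta> * fst (xyb \<beta> \<delta> (Suc n)) k
     + 2*\<beta>*(if k=0 then 0 else fst (xyb \<beta> \<delta> (Suc n)) (k-1))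
     + (if k=0 then 0 else snd (xyb \<beta> \<delta> (Suc n)) (k-1))"
  using xyb_supp[of n \<beta> \<delta>] by (auto simp: Let_def)

theorem lemma4:
  fixes \<phi> :: "complex \<Rightarrow> 'a::ring_1"
    and A B C :: 'a
    and L :: nat and \<alpha> :: "nat \<Rightarrow> complex" and \<beta> \<delta> \<epsilon> :: complex
    and i j :: nat
  assumes alg: "central_complex_hom \<phi>"
    and hC: "commutator A B = C"
    and hAC: "commutator A C =
       (\<Sum>k = 1..L+1. \<phi> (\<alpha> k) * A ^ k) + \<phi> \<delta> * B + \<phi> \<epsilon> + \<phi> \<beta> * anticommutator A B"
    and hj: "1 \<le> j" and hij: "j < i"
  shows "A ^ i * B * A ^ j - A ^ j * B * A ^ i =
       (\<Sum>k = 0..j. \<phi> (ybar \<beta> \<delta> k j) * commutator (A ^ (i + k)) B)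
     - (\<Sum>k = 0..<j. \<phi> (xbar \<beta> \<delta> k j) * anticommutator (A ^ (i + k)) C)"
proof -
  note H = alg[unfolded central_complex_hom_def]
  have p1: "\<phi> 1 = 1" using H by blast
  have padd: "\<And>a b. \<phi> (a+b) = \<phi> a + \<phi> b" using H by blast
  have pmul: "\<And>a b. \<phi> (a*b) = \<phi> a * \<phi> b" using H by blast
  have pc: "\<And>c x. \<phi> c * x = x * \<phi> c" using H by blast
  have p0: "\<phi> 0 = 0" using padd[of 0 0] by simp
  have Cdef: "C = A*B - B*A" using hC unfolding commutator_def by simp
  define W where "W p q = A^p*B*A^q" for p q
  define D where "D p q = W p q - W q p" for p q
  define P where "P = (\<Sum>k = 1..L+1. \<phi> (\<alpha> k) * A ^ k) + \<phi> \<epsilon>"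
  have t: "\<phi> c * A^k * A = A * (\<phi> c * A^k)" for c k
    by (metis mult.assoc pc power_commutes)
  have pcm: "A * (A^n * X) = A^n * (A * X)" for n X
    by (metis mult.assoc power_commutes)
  have PA: "P * A = A * P"
    unfolding P_def distrib_left distrib_right sum_distrib_left sum_distrib_right
    using pc[of \<epsilon> A] t by (simp only:)
  have PAn: "P * A^n = A^n * P" for n
  proof (induction n)
    case (Suc n)
    have "P * A^Suc n = (P * A) * A^n" by (simp add: mult.assoc)
    also have "\<dots> = A * (P * A^n)" by (simp add: PA mult.assoc)
    also have "\<dots> = A^Suc n * P" using Suc by (simp add: mult.assoc)
    finally show ?case .
  qed simp
  have hAC': "A*C - C*A = P + \<phi> \<delta> * B + \<phi> \<beta> * (A*B + B*A)"
    using hAC unfolding commutator_def anticommutator_def P_def by (simp add: algebra_simps)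
  have R: "D (p+2) q - 2*D (p+1) (q+1) + D p (q+2)
              = \<phi> \<delta> * D p q + \<phi> \<beta> * (D (p+1) q + D p (q+1))" for p q
  proof -
    have l: "A^p*(A*C - C*A)*A^q = W (p+2) q - 2*W (p+1) (q+1) + W p (q+2)" for p q
      unfolding Cdef W_def by (simp add: algebra_simps power_add power2_eq_square mult_2 pcm power_commutes)
    have pp: "A^p*P*A^q = A^q*P*A^p"
      by (metis PAn mult.assoc power_add add.commute)
    have cc: "A^p * (\<phi> c * X) * A^q = \<phi> c * (A^p * X * A^q)" for c X
      by (metis mult.assoc pc)
    have cc': "A^n * (\<phi> c * X) = \<phi> c * (A^n * X)" for n c X
      by (metis mult.assoc pc)
    have r: "A^p*(A*C - C*A)*A^q - A^q*(A*C - C*A)*A^p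
         = \<phi> \<delta> * D p q + \<phi> \<beta> * (D (p+1) q + D p (q+1))"
      unfolding hAC' using pp
      by (simp add: distrib_left distrib_right cc D_def W_def algebra_simps power_add cc' pcm)
    have "D (p+2) q - 2*D (p+1) (q+1) + D p (q+2)
       = (W (p+2) q - 2*W (p+1) (q+1) + W p (q+2)) - (W (q+2) p - 2*W (q+1) (p+1) + W q (p+2))"
      unfolding D_def by (simp add: algebra_simps)
    also have "\<dots> = A^p*(A*C - C*A)*A^q - A^q*(A*C - C*A)*A^p"
      by (simp only: l)
    finally show ?thesis using r by simp
  qed
  define S where "S j M q = (\<Sum>k<M. \<phi> (ybar \<beta> \<delta> k j) * D (i+k) q)
      - (\<Sum>k<M. \<phi> (xbar \<beta> \<delta> k j) * (D (i+k+1) q - D (i+k) (q+1)))" for j M q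
  have q2: "\<And>q::nat. q+1+1 = q+2" by simp
  have claim: "\<forall>q M. M \<ge> n+3 \<longrightarrow> S (Suc n) M q = D i (q + Suc n)" for n
  proof (induction n)
    case 0
    show ?case
    proof (intro allI impI)
      fix q M :: nat assume M: "M \<ge> 0+3"
      have y1: "\<phi> (ybar \<beta> \<delta> k 1) * D (i+k) q = (if k = 1 then D (i+1) q else 0)" for k
        by (simp add: ybar_def p0 p1)
      have x1: "\<phi> (xbar \<beta> \<delta> k 1) * (D (i+k+1) q - D (i+k) (q+1))
          = (if k = 0 then D (i+1) q - D i (q+1) else 0)" for k
        by (simp add: xbar_def p0 p1)
      show "S (Suc 0) M q = D i (q + Suc 0)"
        unfolding S_def One_nat_def[symmetric] y1 x1 using M by simp
    qed
  next
    case (Suc n)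
    show ?case
    proof (intro allI impI)
      fix q M :: nat assume M: "M \<ge> Suc n+3"
      have "S (Suc (Suc n)) M q = S (Suc n) M (q+1)"
        unfolding S_def xbar_def ybar_def xyb_rec_x xyb_rec_y q2
        apply (rule step[of \<phi>, OF p0 padd pmul p1 R])
        using M xyb_supp[of n \<beta> \<delta>] by auto
      also have "\<dots> = D i (q + 1 + Suc n)" using Suc.IH M by simp
      also have "\<dots> = D i (q + Suc (Suc n))" by simp
      finally show "S (Suc (Suc n)) M q = D i (q + Suc (Suc n))" .
    qed
  qed
  obtain n where jn: "j = Suc n" using hj by (cases j) auto
  have main: "D i j = S j (j+2) 0" using claim[of n] jn by simp
  have comm: "commutator (A ^ m) B = D m 0" for m
    unfolding commutator_def D_def W_def by simp
  have anti: "anticommutator (A ^ m) C = D (m+1) 0 - D m 1" for m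
    unfolding anticommutator_def D_def W_def Cdef by (simp add: algebra_simps power_add pcm)
  have sup: "ybar \<beta> \<delta> (Suc j) j = 0" "xbar \<beta> \<delta> j j = 0" "xbar \<beta> \<delta> (Suc j) j = 0"
    using xyb_supp[of n \<beta> \<delta>] jn by (auto simp: xbar_def ybar_def)
  have "S j (j+2) 0 = (\<Sum>k = 0..j. \<phi> (ybar \<beta> \<delta> k j) * commutator (A ^ (i + k)) B)
     - (\<Sum>k = 0..<j. \<phi> (xbar \<beta> \<delta> k j) * anticommutator (A ^ (i + k)) C)"
    unfolding S_def comm anti atLeast0AtMost atLeast0LessThan lessThan_Suc_atMost[symmetric]
    by (simp add: sup p0)
  with main show ?thesis unfolding D_def W_def by simp
qed

end
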